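(* Let $N\ge 847$ be an integer, and let $M$ be the set of pairs produced by the born-free matching algorithm with $p_{\max}=5$ for $N$. Then $\sum_{(x,y)\in M} y > \frac{1}{2}\cdot\frac{N(N+1)}{2}$, i.e., the sum of the larger elements of the pairs of $M$ exceeds half of $1+2+\dots+N$.
   Context: For a prime $p$ and a positive integer $N$, let $S_p=\{(x,px): x\in\mathbb{N},\ px\le N\}$. The born-free matching algorithm with $p_{\max}=5$ for $N$: start with $M=\emptyset$; run through the primes $5,3,2$ in this order (only those $\le N$); for each such $p$, run through the pairs $(x,px)\in S_p$ in descending order of $x$, and add $(x,px)$ to $M$ whenever neither $x$ nor $px$ is an endpoint of a pair already in $M$. *)

theory Defs
  imports Main
begin

definition endpoints :: "(nat \<times> nat) set \<Rightarrow> nat set" where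
  "endpoints M = fst ` M \<union> snd ` M"

definition add_pair :: "(nat \<times> nat) set \<Rightarrow> nat \<times> nat \<Rightarrow> (nat \<times> nat) set" where
  "add_pair M xy = (if fst xy \<notin> endpoints M \<and> snd xy \<notin> endpoints M
                    then insert xy M else M)"

definition pairs_desc :: "nat \<Rightarrow> nat \<Rightarrow> (nat \<times> nat) list" where
  "pairs_desc N p = map (\<lambda>x. (x, p * x)) (rev [1..<N div p + 1])"

definition primes_order :: "nat \<Rightarrow> nat list" where
  "primes_order N = filter (\<lambda>p. p \<le> N) [5, 3, 2]"

definition born_free_matching :: "nat \<Rightarrow> (nat \<times> nat) set" where
  "born_free_matching N =
     foldl add_pair {} (concat (map (pairs_desc N) (primes_order N)))"

end

theory Submission
  imports Defs Complex_Main
begin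

lemma fold_sub: "foldl add_pair M xs \<subseteq> M \<union> set xs"
proof (induction xs arbitrary: M)
  case Nil then show ?case by simp
next
  case (Cons q xs)
  have "foldl add_pair M (q#xs) = foldl add_pair (add_pair M q) xs" by simp
  also have "\<dots> \<subseteq> add_pair M q \<union> set xs" using Cons by blast
  also have "\<dots> \<subseteq> M \<union> set (q#xs)" by (auto simp: add_pair_def)
  finally show ?case .
qed

lemma fold_mono: "M \<subseteq> foldl add_pair M xs"
proof (induction xs arbitrary: M)
  case Nil then show ?case by simp
next
  case (Cons q xs)
  have "M \<subseteq> add_pair M q" by (auto simp: add_pair_def)
  then show ?case using Cons[of "add_pair M q"] by simp
qed

lemma ep_sub: "A \<subseteq> B \<Longrightarrow> endpoints A \<subseteq> endpoints B"
  by (auto simp: endpoints_def)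

lemma fold_in:
  assumes "sorted_wrt (\<lambda>a b. fst a > fst b) xs" "q \<in> set xs"
    "fst q \<notin> endpoints M" "snd q \<notin> endpoints M"
    "\<forall>q'\<in>set xs. fst q' > fst q \<longrightarrow>
        (fst q \<noteq> fst q' \<and> fst q \<noteq> snd q' \<and> snd q \<noteq> fst q' \<and> snd q \<noteq> snd q')"
  shows "q \<in> foldl add_pair M xs"
  using assms
proof (induction xs arbitrary: M)
  case Nil then show ?case by simp
next
  case (Cons q' xs)
  show ?case
  proof (cases "q' = q")
    case True
    then have "q \<in> add_pair M q'" using Cons.prems by (simp add: add_pair_def)
    then show ?thesis using fold_mono[of "add_pair M q'" xs] by auto
  next
    case False
    then have qin: "q \<in> set xs" using Cons.prems by simp
    then have gt: "fst q' > fst q" using Cons.prems(1) by simp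
    have "endpoints (add_pair M q') \<subseteq> endpoints M \<union> {fst q', snd q'}"
      by (auto simp: add_pair_def endpoints_def)
    then have "fst q \<notin> endpoints (add_pair M q')" "snd q \<notin> endpoints (add_pair M q')"
      using Cons.prems gt by auto
    then show ?thesis using Cons.IH[of "add_pair M q'"] Cons.prems qin by simp
  qed
qed


lemma pd_sorted: "sorted_wrt (\<lambda>a b. fst a > fst b) (pairs_desc N p)"
  unfolding pairs_desc_def sorted_wrt_map sorted_wrt_rev
  by (rule sorted_wrt_mono_rel[OF _ sorted_wrt_upt]) auto

definition SP :: "(nat \<Rightarrow> bool) \<Rightarrow> nat \<Rightarrow> nat" where
  "SP P n = (\<Sum>x\<in>{x\<in>{1..n}. P x}. x)"

lemma gauss2: "2 * SP (\<lambda>_. True) n = n * (n + 1)"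
proof (induction n)
  case 0 then show ?case by (simp add: SP_def)
next
  case (Suc n)
  have "{x\<in>{1..Suc n}. True} = insert (Suc n) {x\<in>{1..n}. True}" by auto
  then have "SP (\<lambda>_. True) (Suc n) = Suc n + SP (\<lambda>_. True) n" by (simp add: SP_def)
  then show ?case using Suc by simp
qed

lemma sum_dvd: assumes "0 < d" shows "SP (\<lambda>x. d dvd x) n = d * SP (\<lambda>_. True) (n div d)"
proof -
  have e: "{x\<in>{1..n}. d dvd x} = (\<lambda>k. d * k) ` {x\<in>{1..n div d}. True}"
  proof (intro set_eqI iffI)
    fix x assume "x \<in> {x\<in>{1..n}. d dvd x}"
    then obtain k where k: "x = d * k" "1 \<le> x" "x \<le> n" by auto
    then have "1 \<le> k" using assms by (cases k) auto
    moreover have "k \<le> n div d" using k assms by (metis div_le_mono nonzero_mult_div_cancel_left not_gr0)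
    ultimately show "x \<in> (\<lambda>k. d * k) ` {x\<in>{1..n div d}. True}" using k by auto
  next
    fix x assume "x \<in> (\<lambda>k. d * k) ` {x\<in>{1..n div d}. True}"
    then obtain k where k: "x = d * k" "1 \<le> k" "k \<le> n div d" by auto
    have "d * k \<le> d * (n div d)" using k by simp
    also have "\<dots> \<le> n" by simp
    finally show "x \<in> {x\<in>{1..n}. d dvd x}" using k assms by auto
  qed
  have "inj_on (\<lambda>k. d * k) {x\<in>{1..n div d}. True}" using assms by (auto simp: inj_on_def)
  then show ?thesis unfolding SP_def e by (simp add: sum.reindex sum_distrib_left)
qed

lemma sum_split: "SP P n + SP (\<lambda>x. \<not> P x) n = SP (\<lambda>_. True) n"
proof -
  have "{x\<in>{1..n}. True} = {x\<in>{1..n}. P x} \<union> {x\<in>{1..n}. \<not> P x}" by auto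
  then show ?thesis unfolding SP_def by (simp add: sum.union_disjoint[symmetric] Int_def)
qed

lemma sum_or: "SP (\<lambda>x. P x \<or> Q x) n + SP (\<lambda>x. P x \<and> Q x) n = SP P n + SP Q n"
proof -
  have "{x\<in>{1..n}. P x \<or> Q x} = {x\<in>{1..n}. P x} \<union> {x\<in>{1..n}. Q x}"
       "{x\<in>{1..n}. P x \<and> Q x} = {x\<in>{1..n}. P x} \<inter> {x\<in>{1..n}. Q x}" by auto
  then show ?thesis unfolding SP_def by (simp add: sum.union_inter)
qed

lemma range_sum: assumes "a \<le> b"
  shows "(\<Sum>x\<in>{x. a < x \<and> x \<le> b \<and> P x}. x) + SP P a = SP P b"
proof -
  have e: "{x\<in>{1..b}. P x} = {x. a < x \<and> x \<le> b \<and> P x} \<union> {x\<in>{1..a}. P x}"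
    using assms by auto
  have f1: "finite {x. a < x \<and> x \<le> b \<and> P x}" by (rule finite_subset[of _ "{..b}"]) auto
  have f2: "finite {x\<in>{1..a}. P x}" by simp
  have d: "{x. a < x \<and> x \<le> b \<and> P x} \<inter> {x\<in>{1..a}. P x} = {}" by auto
  show ?thesis unfolding SP_def e sum.union_disjoint[OF f1 f2 d] ..
qed

lemma Tb: assumes "0 < k"
  shows "real N ^ 2 / real k ^ 2 - real N / real k \<le> 2 * real (SP (\<lambda>_. True) (N div k))
       \<and> 2 * real (SP (\<lambda>_. True) (N div k)) \<le> real N ^ 2 / real k ^ 2 + real N / real k"
proof -
  define a where "a = N div k"
  define y where "y = real N / real k"
  have e: "2 * real (SP (\<lambda>_. True) (N div k)) = real a * (real a + 1)"
    using gauss2[of "N div k"] unfolding a_def by (metis of_nat_1 of_nat_add of_nat_mult of_nat_numeral)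
  have y2: "real N ^ 2 / real k ^ 2 = y * y" by (simp add: y_def power2_eq_square)
  have "real a * real k \<le> real N" unfolding a_def
    by (metis div_times_less_eq_dividend of_nat_le_iff of_nat_mult)
  then have ay: "real a \<le> y" using assms by (simp add: y_def pos_le_divide_eq)
  have n1: "N = a*k + N mod k" unfolding a_def by simp
  have n2: "N mod k < k" using assms by simp
  have n3: "(a+1)*k = a*k + k" by simp
  have "N < (a + 1) * k" using n1 n2 n3 by linarith
  then have "real N < (real a + 1) * real k" by (metis of_nat_1 of_nat_add of_nat_less_iff of_nat_mult)
  then have ay2: "y < real a + 1" using assms by (simp add: y_def divide_less_eq)
  have y0: "0 \<le> y" by (simp add: y_def)
  have lo: "(y - 1) * y \<le> real a * (real a + 1)"
  proof (cases "y \<le> 1")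
    case True then have "(y - 1) * y \<le> 0" using y0 by (simp add: mult_nonpos_nonneg)
    then show ?thesis by (smt (verit) of_nat_0_le_iff mult_nonneg_nonneg)
  next
    case False
    then show ?thesis using ay2 y0 by (intro mult_mono) auto
  qed
  have hi: "real a * (real a + 1) \<le> y * (y + 1)" using ay by (intro mult_mono) auto
  show ?thesis using lo hi e y2 by (simp add: algebra_simps y_def)
qed


lemma pd_mem: "0 < p \<Longrightarrow> (a, b) \<in> set (pairs_desc N p) \<longleftrightarrow> 1 \<le> a \<and> p * a \<le> N \<and> b = p * a"
proof -
  assume p: "0 < p"
  have h: "a < N div p + 1 \<longleftrightarrow> p * a \<le> N" using p less_eq_div_iff_mult_less_eq[OF p, of a N]
    by (simp add: less_Suc_eq_le mult.commute)
  have "(a, b) \<in> set (pairs_desc N p) \<longleftrightarrow> a \<in> {1..<N div p + 1} \<and> b = p * a"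
    unfolding pairs_desc_def set_map set_rev set_upt by blast
  then show ?thesis using h by simp
qed

lemma ep_pd: "0 < p \<Longrightarrow> v \<in> endpoints (set (pairs_desc N p)) \<Longrightarrow> \<exists>a. 1 \<le> a \<and> p * a \<le> N \<and> (v = a \<or> v = p * a)"
  unfolding endpoints_def by (auto simp: pd_mem)

lemma ep_un: "endpoints (A \<union> B) = endpoints A \<union> endpoints B"
  by (auto simp: endpoints_def)

lemma d1: "3*x = 5*(a::nat) \<Longrightarrow> 5 dvd x" by presburger
lemma d2: "2*x = 5*(a::nat) \<Longrightarrow> 5 dvd x" by presburger
lemma d3: "2*x = 3*(a::nat) \<Longrightarrow> 3 dvd x" by presburger

lemma conflict_free:
  assumes "0 < p" "\<forall>a. 1 \<le> a \<longrightarrow> p*a \<le> N \<longrightarrow> a > x \<longrightarrow> x \<noteq> a \<and> x \<noteq> p*a \<and> y \<noteq> a \<and> y \<noteq> p*a"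
  shows "\<forall>q'\<in>set (pairs_desc N p). fst q' > fst (x, y) \<longrightarrow> (fst (x, y) \<noteq> fst q' \<and> fst (x, y) \<noteq> snd q' \<and> snd (x, y) \<noteq> fst q' \<and> snd (x, y) \<noteq> snd q')"
proof (intro ballI impI)
  fix q' assume q: "q' \<in> set (pairs_desc N p)" "fst q' > fst (x, y)"
  obtain a b where ab: "q' = (a, b)" by (cases q')
  have "1 \<le> a" "p*a \<le> N" "b = p*a" using q(1) pd_mem[OF assms(1)] ab by auto
  moreover have "a > x" using q(2) ab by simp
  ultimately have "x \<noteq> a \<and> x \<noteq> p*a \<and> y \<noteq> a \<and> y \<noteq> p*a" using assms(2) by blast
  then show "fst (x, y) \<noteq> fst q' \<and> fst (x, y) \<noteq> snd q' \<and> snd (x, y) \<noteq> fst q' \<and> snd (x, y) \<noteq> snd q'"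
    using ab \<open>b = p*a\<close> by simp
qed

lemma not_ep:
  assumes "0 < p" "endpoints M \<subseteq> endpoints (set (pairs_desc N p)) \<union> endpoints (set (pairs_desc N r))" "0 < r"
    "\<not> (\<exists>a. 1 \<le> a \<and> p * a \<le> N \<and> (v = a \<or> v = p * a))"
    "\<not> (\<exists>a. 1 \<le> a \<and> r * a \<le> N \<and> (v = a \<or> v = r * a))"
  shows "v \<notin> endpoints M"
  using assms ep_pd[OF assms(1), of v N] ep_pd[OF assms(3), of v N] by blast

theorem theorem4:
  fixes N :: nat
  assumes "N \<ge> 847"
  shows "4 * (\<Sum>(x, y)\<in>born_free_matching N. y) > N * (N + 1)"
proof -
  have po: "primes_order N = [5,3,2]" using assms by (simp add: primes_order_def)
  define L5 where "L5 = pairs_desc N 5"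
  define L3 where "L3 = pairs_desc N 3"
  define L2 where "L2 = pairs_desc N 2"
  define M5 where "M5 = foldl add_pair {} L5"
  define M3 where "M3 = foldl add_pair M5 L3"
  define M where "M = foldl add_pair M3 L2"
  have bf: "born_free_matching N = M"
    by (simp add: born_free_matching_def po M_def M3_def M5_def L5_def L3_def L2_def)
  have s5: "M5 \<subseteq> set L5" using fold_sub[of "{}" L5] unfolding M5_def by simp
  have ep5: "endpoints M5 \<subseteq> endpoints (set L5)" using ep_sub[OF s5] .
  have s3: "M3 \<subseteq> M5 \<union> set L3" using fold_sub[of M5 L3] unfolding M3_def .
  have "endpoints M3 \<subseteq> endpoints M5 \<union> endpoints (set L3)" using ep_sub[OF s3] unfolding ep_un .
  then have ep3: "endpoints M3 \<subseteq> endpoints (set L5) \<union> endpoints (set L3)" using ep5 by blast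
  have ep5': "endpoints M5 \<subseteq> endpoints (set (pairs_desc N 5)) \<union> endpoints (set (pairs_desc N 5))"
    using ep5 unfolding L5_def by blast
  have ep3': "endpoints M3 \<subseteq> endpoints (set (pairs_desc N 5)) \<union> endpoints (set (pairs_desc N 3))"
    using ep3 unfolding L5_def L3_def .
  have in5: "(x, 5*x) \<in> M5" if "N < 25*x" "5*x \<le> N" for x
    unfolding M5_def
  proof (rule fold_in)
    show "sorted_wrt (\<lambda>a b. fst a > fst b) L5" unfolding L5_def by (rule pd_sorted)
    show "(x, 5*x) \<in> set L5" unfolding L5_def using that by (simp add: pd_mem)
    show "fst (x, 5 * x) \<notin> endpoints {}" "snd (x, 5 * x) \<notin> endpoints {}" by (auto simp: endpoints_def)
    have "\<forall>a. 1 \<le> a \<longrightarrow> 5*a \<le> N \<longrightarrow> a > x \<longrightarrow> x \<noteq> a \<and> x \<noteq> 5*a \<and> 5*x \<noteq> a \<and> 5*x \<noteq> 5*a"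
      using that by (intro allI impI conjI; linarith)
    then show "\<forall>q'\<in>set L5. fst q' > fst (x, 5*x) \<longrightarrow> (fst (x, 5*x) \<noteq> fst q' \<and> fst (x, 5*x) \<noteq> snd q' \<and> snd (x, 5*x) \<noteq> fst q' \<and> snd (x, 5*x) \<noteq> snd q')"
      unfolding L5_def by (intro conflict_free) auto
  qed
  have in3: "(x, 3*x) \<in> M3" if "N < 5*x" "3*x \<le> N" "\<not> 5 dvd x" for x
    unfolding M3_def
  proof (rule fold_in)
    show "sorted_wrt (\<lambda>a b. fst a > fst b) L3" unfolding L3_def by (rule pd_sorted)
    show "(x, 3*x) \<in> set L3" unfolding L3_def using that by (simp add: pd_mem)
    have "\<not> (\<exists>a. 1 \<le> a \<and> 5 * a \<le> N \<and> (x = a \<or> x = 5 * a))" using that d1 d2 d3 by (clarify; elim disjE; (linarith | metis d1 d2 d3 dvd_triv_left))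
    then show "fst (x, 3 * x) \<notin> endpoints M5" using not_ep[OF _ ep5'] by simp
    have "\<not> (\<exists>a. 1 \<le> a \<and> 5 * a \<le> N \<and> (3*x = a \<or> 3*x = 5 * a))" using that d1 d2 d3 by (clarify; elim disjE; (linarith | metis d1 d2 d3 dvd_triv_left))
    then show "snd (x, 3 * x) \<notin> endpoints M5" using not_ep[OF _ ep5'] by simp
    have "\<forall>a. 1 \<le> a \<longrightarrow> 3*a \<le> N \<longrightarrow> a > x \<longrightarrow> x \<noteq> a \<and> x \<noteq> 3*a \<and> 3*x \<noteq> a \<and> 3*x \<noteq> 3*a"
      using that by (intro allI impI conjI; linarith)
    then show "\<forall>q'\<in>set L3. fst q' > fst (x, 3*x) \<longrightarrow> (fst (x, 3*x) \<noteq> fst q' \<and> fst (x, 3*x) \<noteq> snd q' \<and> snd (x, 3*x) \<noteq> fst q' \<and> snd (x, 3*x) \<noteq> snd q')"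
      unfolding L3_def by (intro conflict_free) auto
  qed
  have in2: "(x, 2*x) \<in> M" if "N < 3*x" "2*x \<le> N" "\<not> 5 dvd x" "\<not> 3 dvd x" for x
    unfolding M_def
  proof (rule fold_in)
    show "sorted_wrt (\<lambda>a b. fst a > fst b) L2" unfolding L2_def by (rule pd_sorted)
    show "(x, 2*x) \<in> set L2" unfolding L2_def using that by (simp add: pd_mem)
    have "\<not> (\<exists>a. 1 \<le> a \<and> 5 * a \<le> N \<and> (x = a \<or> x = 5 * a))" using that d1 d2 d3 by (clarify; elim disjE; (linarith | metis d1 d2 d3 dvd_triv_left))
    moreover have "\<not> (\<exists>a. 1 \<le> a \<and> 3 * a \<le> N \<and> (x = a \<or> x = 3 * a))" using that d1 d2 d3 by (clarify; elim disjE; (linarith | metis d1 d2 d3 dvd_triv_left))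
    ultimately show "fst (x, 2 * x) \<notin> endpoints M3" using not_ep[OF _ ep3'] by simp
    have "\<not> (\<exists>a. 1 \<le> a \<and> 5 * a \<le> N \<and> (2*x = a \<or> 2*x = 5 * a))" using that d1 d2 d3 by (clarify; elim disjE; (linarith | metis d1 d2 d3 dvd_triv_left))
    moreover have "\<not> (\<exists>a. 1 \<le> a \<and> 3 * a \<le> N \<and> (2*x = a \<or> 2*x = 3 * a))" using that d1 d2 d3 by (clarify; elim disjE; (linarith | metis d1 d2 d3 dvd_triv_left))
    ultimately show "snd (x, 2 * x) \<notin> endpoints M3" using not_ep[OF _ ep3'] by simp
    have "\<forall>a. 1 \<le> a \<longrightarrow> 2*a \<le> N \<longrightarrow> a > x \<longrightarrow> x \<noteq> a \<and> x \<noteq> 2*a \<and> 2*x \<noteq> a \<and> 2*x \<noteq> 2*a"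
      using that by (intro allI impI conjI; linarith)
    then show "\<forall>q'\<in>set L2. fst q' > fst (x, 2*x) \<longrightarrow> (fst (x, 2*x) \<noteq> fst q' \<and> fst (x, 2*x) \<noteq> snd q' \<and> snd (x, 2*x) \<noteq> fst q' \<and> snd (x, 2*x) \<noteq> snd q')"
      unfolding L2_def by (intro conflict_free) auto
  qed
  define A5 where "A5 = {x. N div 25 < x \<and> x \<le> N div 5 \<and> True}"
  define A3 where "A3 = {x. N div 5 < x \<and> x \<le> N div 3 \<and> \<not> 5 dvd x}"
  define A2 where "A2 = {x. N div 3 < x \<and> x \<le> N div 2 \<and> (\<not> 3 dvd x \<and> \<not> 5 dvd x)}"
  define I5 where "I5 = (\<lambda>x. (x, 5*x)) ` A5"
  define I3 where "I3 = (\<lambda>x. (x, 3*x)) ` A3"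
  define I2 where "I2 = (\<lambda>x. (x, 2*x)) ` A2"
  have m53: "M5 \<subseteq> M3" unfolding M3_def by (rule fold_mono)
  have m3: "M3 \<subseteq> M" unfolding M_def by (rule fold_mono)
  have dl: "\<And>q m n::nat. 0 < q \<Longrightarrow> (n div q < m) = (n < m*q)" by (rule div_less_iff_less_mult)
  have dl2: "\<And>q m n::nat. 0 < q \<Longrightarrow> (m \<le> n div q) = (m*q \<le> n)" by (rule less_eq_div_iff_mult_less_eq)
  have "I5 \<subseteq> M"
  proof
    fix q assume "q \<in> I5"
    then obtain x where x: "q = (x, 5*x)" "N div 25 < x" "x \<le> N div 5" unfolding I5_def A5_def by auto
    have "N < 25*x" "5*x \<le> N" using x dl[of 25 N x] dl2[of 5 x N] by (simp_all add: mult.commute)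
    then show "q \<in> M" using in5 m53 m3 x by blast
  qed
  moreover have "I3 \<subseteq> M"
  proof
    fix q assume "q \<in> I3"
    then obtain x where x: "q = (x, 3*x)" "N div 5 < x" "x \<le> N div 3" "\<not> 5 dvd x" unfolding I3_def A3_def by auto
    have "N < 5*x" "3*x \<le> N" using x dl[of 5 N x] dl2[of 3 x N] by (simp_all add: mult.commute)
    then show "q \<in> M" using in3 m3 x by blast
  qed
  moreover have "I2 \<subseteq> M"
  proof
    fix q assume "q \<in> I2"
    then obtain x where x: "q = (x, 2*x)" "N div 3 < x" "x \<le> N div 2" "\<not> 5 dvd x" "\<not> 3 dvd x"
      unfolding I2_def A2_def by auto
    have "N < 3*x" "2*x \<le> N" using x dl[of 3 N x] dl2[of 2 x N] by (simp_all add: mult.commute)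
    then show "q \<in> M" using in2 x by blast
  qed
  ultimately have sub: "I5 \<union> I3 \<union> I2 \<subseteq> M" by blast
  have finM: "finite M"
  proof -
    have "M \<subseteq> M3 \<union> set L2" using fold_sub[of M3 L2] unfolding M_def .
    then have "M \<subseteq> set L5 \<union> set L3 \<union> set L2" using s5 s3 by blast
    then show ?thesis by (rule finite_subset) simp
  qed
  have fA5: "finite A5" unfolding A5_def by (rule finite_subset[of _ "{..N}"]) auto
  have fA3: "finite A3" unfolding A3_def by (rule finite_subset[of _ "{..N}"]) auto
  have fA2: "finite A2" unfolding A2_def by (rule finite_subset[of _ "{..N}"]) auto
  have d53: "N div 5 \<le> N div 3" "N div 25 \<le> N div 5" "N div 3 \<le> N div 2" by (simp_all add: div_le_mono2)
  have "I5 \<inter> I3 = {}" unfolding I5_def I3_def A5_def A3_def by auto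
  moreover have "(I5 \<union> I3) \<inter> I2 = {}" unfolding I5_def I3_def I2_def A5_def A3_def A2_def using d53 by auto
  moreover have "finite I5" "finite I3" "finite I2" unfolding I5_def I3_def I2_def using fA5 fA3 fA2 by auto
  ultimately have sU: "(\<Sum>(x, y)\<in>I5 \<union> I3 \<union> I2. y) = (\<Sum>(x, y)\<in>I5. y) + (\<Sum>(x, y)\<in>I3. y) + (\<Sum>(x, y)\<in>I2. y)"
    by (simp add: sum.union_disjoint)
  have r5: "(\<Sum>(x, y)\<in>I5. y) = 5 * (\<Sum>x\<in>A5. x)"
  proof -
    have "inj_on (\<lambda>x. (x, 5*x)) A5" by (auto simp: inj_on_def)
    then show ?thesis unfolding I5_def by (simp add: sum.reindex sum_distrib_left)
  qed
  have r3: "(\<Sum>(x, y)\<in>I3. y) = 3 * (\<Sum>x\<in>A3. x)"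
  proof -
    have "inj_on (\<lambda>x. (x, 3*x)) A3" by (auto simp: inj_on_def)
    then show ?thesis unfolding I3_def by (simp add: sum.reindex sum_distrib_left)
  qed
  have r2: "(\<Sum>(x, y)\<in>I2. y) = 2 * (\<Sum>x\<in>A2. x)"
  proof -
    have "inj_on (\<lambda>x. (x, 2*x)) A2" by (auto simp: inj_on_def)
    then show ?thesis unfolding I2_def by (simp add: sum.reindex sum_distrib_left)
  qed
  have mono: "(\<Sum>(x, y)\<in>I5 \<union> I3 \<union> I2. y) \<le> (\<Sum>(x, y)\<in>M. y)"
    using sub finM by (intro sum_mono2) auto
  define S5 where "S5 = (\<Sum>x\<in>A5. x)"
  define S3 where "S3 = (\<Sum>x\<in>A3. x)"
  define S2 where "S2 = (\<Sum>x\<in>A2. x)"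
  have low: "5 * S5 + 3 * S3 + 2 * S2 \<le> (\<Sum>(x, y)\<in>M. y)"
    using mono sU r5 r3 r2 unfolding S5_def S3_def S2_def by simp
  define T where "T k = SP (\<lambda>_. True) (N div k)" for k
  define F where "F n = SP (\<lambda>x. \<not> 5 dvd x) n" for n
  define G where "G n = SP (\<lambda>x. \<not> 3 dvd x \<and> \<not> 5 dvd x) n" for n
  have e5: "S5 + T 25 = T 5" unfolding S5_def T_def A5_def using range_sum[OF d53(2), of "\<lambda>_. True"] by simp
  have e3: "S3 + F (N div 5) = F (N div 3)" unfolding S3_def F_def A3_def
    using range_sum[OF d53(1), of "\<lambda>x. \<not> 5 dvd x"] by simp
  have e2: "S2 + G (N div 3) = G (N div 2)" unfolding S2_def G_def A2_def
    using range_sum[OF d53(3), of "\<lambda>x. \<not> 3 dvd x \<and> \<not> 5 dvd x"] by simp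
  have fF: "F n + 5 * SP (\<lambda>_. True) (n div 5) = SP (\<lambda>_. True) n" for n
    using sum_split[of "\<lambda>x. 5 dvd x" n] sum_dvd[of 5 n] unfolding F_def by simp
  have l15: "(\<lambda>x. 3 dvd x \<and> 5 dvd x) = (\<lambda>x::nat. 15 dvd x)" by (rule ext) presburger
  have l35: "(\<lambda>x. \<not> (3 dvd x \<or> 5 dvd x)) = (\<lambda>x::nat. \<not> 3 dvd x \<and> \<not> 5 dvd x)" by auto
  have fG: "G n + 3 * SP (\<lambda>_. True) (n div 3) + 5 * SP (\<lambda>_. True) (n div 5)
      = SP (\<lambda>_. True) n + 15 * SP (\<lambda>_. True) (n div 15)" for n
  proof -
    have a: "SP (\<lambda>x. 3 dvd x \<or> 5 dvd x) n + G n = SP (\<lambda>_. True) n"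
      using sum_split[of "\<lambda>x. 3 dvd x \<or> 5 dvd x" n] unfolding G_def l35 .
    have b: "SP (\<lambda>x. 3 dvd x \<or> 5 dvd x) n + SP (\<lambda>x. 15 dvd x) n = SP (\<lambda>x. 3 dvd x) n + SP (\<lambda>x. 5 dvd x) n"
      using sum_or[of "\<lambda>x. 3 dvd x" "\<lambda>x. 5 dvd x" n] unfolding l15 .
    show ?thesis using a b sum_dvd[of 3 n] sum_dvd[of 5 n] sum_dvd[of 15 n] by simp
  qed
  have q1: "N div 5 div 5 = N div 25" using div_mult2_eq[of N 5 5] by simp
  have q2: "N div 3 div 5 = N div 15" using div_mult2_eq[of N 3 5] by simp
  have q3: "N div 2 div 3 = N div 6" using div_mult2_eq[of N 2 3] by simp
  have q4: "N div 2 div 5 = N div 10" using div_mult2_eq[of N 2 5] by simp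
  have q5: "N div 2 div 15 = N div 30" using div_mult2_eq[of N 2 15] by simp
  have q6: "N div 3 div 3 = N div 9" using div_mult2_eq[of N 3 3] by simp
  have q7: "N div 3 div 15 = N div 45" using div_mult2_eq[of N 3 15] by simp
  have f1: "F (N div 5) + 5 * T 25 = T 5" using fF[of "N div 5"] q1 unfolding T_def by simp
  have f2: "F (N div 3) + 5 * T 15 = T 3" using fF[of "N div 3"] q2 unfolding T_def by simp
  have g1: "G (N div 2) + 3 * T 6 + 5 * T 10 = T 2 + 15 * T 30" using fG[of "N div 2"] q3 q4 q5 unfolding T_def by simp
  have g2: "G (N div 3) + 3 * T 9 + 5 * T 15 = T 3 + 15 * T 45" using fG[of "N div 3"] q6 q2 q7 unfolding T_def by simp
  have key: "real N * (real N + 1) < 4 * (5 * real S5 + 3 * real S3 + 2 * real S2)"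
  proof -
    have R: "\<And>a b c::nat. a + b = c \<Longrightarrow> real a + real b = real c" by simp
    note E = R[OF e5] R[OF e3] R[OF e2] R[OF f1] R[OF f2]
    have G1: "real (G (N div 2)) + 3 * real (T 6) + 5 * real (T 10) = real (T 2) + 15 * real (T 30)"
      using arg_cong[OF g1, of real] by simp
    have G2: "real (G (N div 3)) + 3 * real (T 9) + 5 * real (T 15) = real (T 3) + 15 * real (T 45)"
      using arg_cong[OF g2, of real] by simp
    have F1: "real (F (N div 5)) + 5 * real (T 25) = real (T 5)"
      using arg_cong[OF f1, of real] by simp
    have F2: "real (F (N div 3)) + 5 * real (T 15) = real (T 3)"
      using arg_cong[OF f2, of real] by simp
    have B: "real N ^ 2 / real k ^ 2 - real N / real k \<le> 2 * real (T k) \<and> 2 * real (T k) \<le> real N ^ 2 / real k ^ 2 + real N / real k"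
      if "0 < k" for k using Tb[OF that, of N] unfolding T_def .
    have b2: "real N ^ 2 / 4 - real N / 2 \<le> 2 * real (T 2)" using B[of 2] by simp
    have b3: "real N ^ 2 / 9 - real N / 3 \<le> 2 * real (T 3)" using B[of 3] by simp
    have b5: "real N ^ 2 / 25 - real N / 5 \<le> 2 * real (T 5)" using B[of 5] by simp
    have b9: "real N ^ 2 / 81 - real N / 9 \<le> 2 * real (T 9)" using B[of 9] by simp
    have b25: "real N ^ 2 / 625 - real N / 25 \<le> 2 * real (T 25)" using B[of 25] by simp
    have b30: "real N ^ 2 / 900 - real N / 30 \<le> 2 * real (T 30)" using B[of 30] by simp
    have c6: "2 * real (T 6) \<le> real N ^ 2 / 36 + real N / 6" using B[of 6] by simp
    have c10: "2 * real (T 10) \<le> real N ^ 2 / 100 + real N / 10" using B[of 10] by simp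
    have c15: "2 * real (T 15) \<le> real N ^ 2 / 225 + real N / 15" using B[of 15] by simp
    have c45: "2 * real (T 45) \<le> real N ^ 2 / 2025 + real N / 45" using B[of 45] by simp
    have nn: "847 * real N \<le> real N ^ 2" using assms by (simp add: power2_eq_square)
    have n0: "847 \<le> real N" using assms by simp
    have "real N * (real N + 1) = real N ^ 2 + real N" by (simp add: power2_eq_square algebra_simps)
    moreover have "4 * (5 * real S5 + 3 * real S3 + 2 * real S2) = 8 * real (T 5) + 40 * real (T 25) + 4 * real (T 3)
       - 20 * real (T 15) + 8 * real (T 2) - 24 * real (T 6) - 40 * real (T 10) + 120 * real (T 30)
       + 24 * real (T 9) - 120 * real (T 45)"
      using E G1 G2 F1 F2 by argo
    moreover have "real N ^ 2 + real N < 8 * real (T 5) + 40 * real (T 25) + 4 * real (T 3)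
       - 20 * real (T 15) + 8 * real (T 2) - 24 * real (T 6) - 40 * real (T 10) + 120 * real (T 30)
       + 24 * real (T 9) - 120 * real (T 45)"
      using b2 b3 b5 b9 b25 b30 c6 c10 c15 c45 nn n0 by argo
    ultimately show ?thesis by linarith
  qed
  have "N * (N + 1) < 4 * (5 * S5 + 3 * S3 + 2 * S2)"
  proof -
    have "real (N * (N + 1)) < real (4 * (5 * S5 + 3 * S3 + 2 * S2))" using key by (simp add: ring_distribs)
    then show ?thesis by (simp only: of_nat_less_iff)
  qed
  then show ?thesis using low bf by simp
qed

end
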